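(* For any tournament $\mathrel{W}$ and any ranking $R$ that is both $\mathrel{W}$-feasible and $\mathrel{W}$-efficient, there exists a regret-free strategy whose outcome under $\mathrel{W}$ is $R$.
   Context: Let $\mathcal{X}$ be a finite set of alternatives. A proto-ranking is an irreflexive and transitive binary relation on $\mathcal{X}$; a ranking is a total proto-ranking; a tournament is a total and asymmetric binary relation on $\mathcal{X}$. The chair has a fixed preference $\succ$, a ranking on $\mathcal{X}$. Interaction: given a tournament $\mathrel{W}$, set $R_0=\varnothing$; in each period $t\geq1$ with $R_{t-1}$ not total, the chair offers a pair $\{x,y\}$ of distinct alternatives unranked by $R_{t-1}$, the winner is $x$ if $x\mathrel{W}y$ and $y$ otherwise, and $R_t$ is the transitive closure of $R_{t-1}\cup\{(\text{winner},\text{loser})\}$; stop when $R_t$ is total. A history is a sequence of (winner, loser) pairs that can arise this way; a strategy assigns to each non-terminal history a pair unranked at it. The outcome of $\sigma$ under $\mathrel{W}$ is the final ranking. A ranking is $\mathrel{W}$-feasible if it is the outcome under $\mathrel{W}$ of some strategy. $R$ is more aligned with $\succ$ than $R'$ if for all $x\succ y$, $xR'y$ implies $xRy$. A ranking is $\mathrel{W}$-unimprovable if no other $\mathrel{W}$-feasible ranking is more aligned with $\succ$. A strategy is regret-free if for every tournament $\mathrel{W}$ its outcome under $\mathrel{W}$ is $\mathrel{W}$-unimprovable. A ranking $R$ is $\mathrel{W}$-efficient if $x\succ y$ and $x\mathrel{W}y$ imply $xRy$. *)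

theory Defs
  imports Main
begin

text \<open>Alternatives: the elements of a finite type 'a (so the set of alternatives is UNIV).
  Binary relations are sets of pairs; (x,y) \<in> R means x is ranked above y.\<close>

definition proto_ranking :: "'a rel \<Rightarrow> bool" where
  "proto_ranking R \<longleftrightarrow> irrefl R \<and> trans R"

definition ranking :: "'a rel \<Rightarrow> bool" where
  "ranking R \<longleftrightarrow> proto_ranking R \<and> total R"

definition tournament :: "'a rel \<Rightarrow> bool" where
  "tournament W \<longleftrightarrow> total W \<and> asym W"

text \<open>Relation generated by a history (list of (winner, loser) pairs, oldest first):
  R_0 = {} and R_t = transitive closure of R_(t-1) plus the new pair.\<close>
definition rel_hist :: "('a \<times> 'a) list \<Rightarrow> 'a rel" where
  "rel_hist h = foldl (\<lambda>R p. trancl (R \<union> {p})) {} h"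

definition unranked :: "'a rel \<Rightarrow> 'a \<Rightarrow> 'a \<Rightarrow> bool" where
  "unranked R x y \<longleftrightarrow> x \<noteq> y \<and> (x, y) \<notin> R \<and> (y, x) \<notin> R"

inductive hist_under :: "'a rel \<Rightarrow> ('a \<times> 'a) list \<Rightarrow> bool" for W where
  Nil: "hist_under W []"
| Step: "\<lbrakk> hist_under W h; \<not> total (rel_hist h); unranked (rel_hist h) x y; (x, y) \<in> W \<rbrakk>
          \<Longrightarrow> hist_under W (h @ [(x, y)])"

definition history :: "('a \<times> 'a) list \<Rightarrow> bool" where
  "history h \<longleftrightarrow> (\<exists>W. tournament W \<and> hist_under W h)"

definition strategy :: "(('a \<times> 'a) list \<Rightarrow> 'a set) \<Rightarrow> bool" where
  "strategy \<sigma> \<longleftrightarrow> (\<forall>h. history h \<and> \<not> total (rel_hist h) \<longrightarrow>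
       (\<exists>x y. \<sigma> h = {x, y} \<and> unranked (rel_hist h) x y))"

inductive reaches :: "'a rel \<Rightarrow> (('a \<times> 'a) list \<Rightarrow> 'a set) \<Rightarrow> ('a \<times> 'a) list \<Rightarrow> bool"
  for W \<sigma> where
  Nil: "reaches W \<sigma> []"
| Step: "\<lbrakk> reaches W \<sigma> h; \<not> total (rel_hist h); \<sigma> h = {x, y}; x \<noteq> y; (x, y) \<in> W \<rbrakk>
          \<Longrightarrow> reaches W \<sigma> (h @ [(x, y)])"

definition is_outcome :: "'a rel \<Rightarrow> (('a \<times> 'a) list \<Rightarrow> 'a set) \<Rightarrow> 'a rel \<Rightarrow> bool" where
  "is_outcome W \<sigma> R \<longleftrightarrow> (\<exists>h. reaches W \<sigma> h \<and> total (rel_hist h) \<and> R = rel_hist h)"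

definition feasible :: "'a rel \<Rightarrow> 'a rel \<Rightarrow> bool" where
  "feasible W R \<longleftrightarrow> ranking R \<and> (\<exists>\<sigma>. strategy \<sigma> \<and> is_outcome W \<sigma> R)"

definition more_aligned :: "'a rel \<Rightarrow> 'a rel \<Rightarrow> 'a rel \<Rightarrow> bool" where
  "more_aligned P R R' \<longleftrightarrow> (\<forall>x y. (x, y) \<in> P \<longrightarrow> (x, y) \<in> R' \<longrightarrow> (x, y) \<in> R)"

definition unimprovable :: "'a rel \<Rightarrow> 'a rel \<Rightarrow> 'a rel \<Rightarrow> bool" where
  "unimprovable P W R \<longleftrightarrow> ranking R \<and>
     \<not> (\<exists>R'. feasible W R' \<and> R' \<noteq> R \<and> more_aligned P R' R)"

definition regret_free :: "'a rel \<Rightarrow> (('a \<times> 'a) list \<Rightarrow> 'a set) \<Rightarrow> bool" where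
  "regret_free P \<sigma> \<longleftrightarrow> (\<forall>W R. tournament W \<longrightarrow> is_outcome W \<sigma> R \<longrightarrow> unimprovable P W R)"

definition efficient :: "'a rel \<Rightarrow> 'a rel \<Rightarrow> 'a rel \<Rightarrow> bool" where
  "efficient P W R \<longleftrightarrow> (\<forall>x y. (x, y) \<in> P \<longrightarrow> (x, y) \<in> W \<longrightarrow> (x, y) \<in> R)"

end

theory Submission
  imports Defs
begin

definition cmp :: "'a rel \<Rightarrow> 'a \<Rightarrow> 'a \<Rightarrow> bool" where
  "cmp Q a b \<longleftrightarrow> (a, b) \<in> Q \<or> (b, a) \<in> Q"

definition nogap :: "'a rel \<Rightarrow> 'a rel \<Rightarrow> bool" where
  "nogap P Q \<longleftrightarrow> (\<forall>u v m. (u, v) \<in> Q \<longrightarrow> (v, u) \<in> P \<longrightarrow> (v, m) \<in> P \<longrightarrow> (m, u) \<in> P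
      \<longrightarrow> cmp Q m u \<or> cmp Q m v)"

definition gp :: "'a rel \<Rightarrow> 'a rel \<Rightarrow> 'a \<Rightarrow> 'a \<Rightarrow> bool" where
  "gp P Q x y \<longleftrightarrow> (x, y) \<in> P \<and> unranked Q x y \<and>
     (\<forall>d. (x, d) \<in> Q \<longrightarrow> (d, y) \<in> P \<longrightarrow> (y, d) \<in> Q) \<and>
     (\<forall>c. (c, y) \<in> Q \<longrightarrow> (x, c) \<in> P \<longrightarrow> (c, x) \<in> Q) \<and>
     (\<forall>m. (x, m) \<in> P \<longrightarrow> (m, y) \<in> P \<longrightarrow> cmp Q m x \<or> cmp Q m y)"

definition clean :: "'a rel \<Rightarrow> 'a rel \<Rightarrow> 'a rel \<Rightarrow> bool" where
  "clean P W Q \<longleftrightarrow> (\<forall>a b. (a, b) \<in> Q \<longrightarrow> (b, a) \<in> P \<longrightarrow> (a, b) \<in> W)"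

definition invr :: "'a rel \<Rightarrow> 'a rel \<Rightarrow> 'a rel \<Rightarrow> bool" where
  "invr P W Q \<longleftrightarrow> irrefl Q \<and> trans Q \<and> nogap P Q \<and> clean P W Q"

lemma trancl_ins:
  assumes "trans Q"
  shows "trancl (Q \<union> {(a, b)}) = Q \<union> {(c, d). (c = a \<or> (c, a) \<in> Q) \<and> (d = b \<or> (b, d) \<in> Q)}"
proof -
  have r: "Q\<^sup>* = Q\<^sup>=" using assms by (simp add: rtrancl_trancl_reflcl)
  have "trancl (Q \<union> {(a, b)}) = trancl (insert (a, b) Q)" by simp
  also have "\<dots> = Q \<union> {(c, d). (c, a) \<in> Q\<^sup>* \<and> (b, d) \<in> Q\<^sup>*}"
    using assms by (simp add: trancl_insert)
  finally show ?thesis using r by auto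
qed

lemma safeA:
  assumes iP: "irrefl P" and tP: "trans P" and toP: "total P"
    and tQ: "trans Q" and ng: "nogap P Q" and g: "gp P Q x y"
    and c: "c = x \<or> (c, x) \<in> Q" and d: "d = y \<or> (y, d) \<in> Q" and dc: "(d, c) \<in> P"
  shows "(c, d) \<in> Q"
proof -
  have xy: "(x, y) \<in> P" and un: "x \<noteq> y" "(x, y) \<notin> Q" "(y, x) \<notin> Q"
    using g by (auto simp: gp_def unranked_def)
  have ngD: "\<And>u v m. (u, v) \<in> Q \<Longrightarrow> (v, u) \<in> P \<Longrightarrow> (v, m) \<in> P \<Longrightarrow> (m, u) \<in> P
      \<Longrightarrow> cmp Q m u \<or> cmp Q m v" using ng unfolding nogap_def by blast
  have Ptot: "\<And>a b. a \<noteq> b \<Longrightarrow> (a, b) \<in> P \<or> (b, a) \<in> P" using toP by (auto simp: total_on_def)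
  have Pas: "\<And>a b. (a, b) \<in> P \<Longrightarrow> (b, a) \<notin> P" using iP tP
    by (metis irreflD transD)
  have Ptr: "\<And>a b e. (a, b) \<in> P \<Longrightarrow> (b, e) \<in> P \<Longrightarrow> (a, e) \<in> P" using tP by (meson transD)
  have Qtr: "\<And>a b e. (a, b) \<in> Q \<Longrightarrow> (b, e) \<in> Q \<Longrightarrow> (a, e) \<in> Q" using tQ by (meson transD)
  have s1: "(x, e) \<in> Q" if "(y, e) \<in> Q" "(e, x) \<in> P" for e
  proof -
    have "(e, y) \<in> P" using that xy Ptr by blast
    have "cmp Q x y \<or> cmp Q x e" by (rule ngD[OF that(1) \<open>(e,y)\<in>P\<close> that(2) xy])
    then show ?thesis using un that(1) Qtr unfolding cmp_def by blast
  qed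
  have s2: "(e, y) \<in> Q" if "(e, x) \<in> Q" "(y, e) \<in> P" for e
  proof -
    have "(x, e) \<in> P" using that xy Ptr by blast
    have "cmp Q y e \<or> cmp Q y x" by (rule ngD[OF that(1) \<open>(x,e)\<in>P\<close> xy that(2)])
    then show ?thesis using un that(1) Qtr unfolding cmp_def by blast
  qed
  show ?thesis
  proof (cases "c = x")
    case True
    show ?thesis
    proof (cases "d = y")
      case True
      then show ?thesis using \<open>c = x\<close> dc xy Pas by blast
    next
      case False
      then show ?thesis using s1 d dc \<open>c = x\<close> by blast
    qed
  next
    case False
    then have cx: "(c, x) \<in> Q" using c by blast
    show ?thesis
    proof (cases "d = y")
      case True
      then show ?thesis using s2 cx dc by blast
    next
      case False
      then have yd: "(y, d) \<in> Q" using d by blast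
      have dx: "d \<noteq> x" using yd un by blast
      have cy: "c \<noteq> y" using cx un by blast
      have A1: "(x, d) \<in> Q \<or> (x, d) \<in> P" using s1[OF yd] Ptot dx by blast
      have A2: "(c, y) \<in> Q \<or> (c, y) \<in> P" using s2[OF cx] Ptot cy by blast
      show ?thesis
      proof (cases "(x, d) \<in> Q \<or> (c, y) \<in> Q")
        case True
        then show ?thesis using cx yd Qtr by blast
      next
        case False
        then have xd: "(x, d) \<in> P" and cyP: "(c, y) \<in> P" using A1 A2 by auto
        have "(x, c) \<in> P" using xd dc Ptr by blast
        have "cmp Q d c \<or> cmp Q d x" by (rule ngD[OF cx \<open>(x,c)\<in>P\<close> xd dc])
        then show ?thesis using cx yd un Qtr unfolding cmp_def by blast
      qed
    qed
  qed
qed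

lemma safeB:
  assumes iP: "irrefl P" and tP: "trans P" and toP: "total P"
    and tQ: "trans Q" and g: "gp P Q x y"
    and c: "c = y \<or> (c, y) \<in> Q" and d: "d = x \<or> (x, d) \<in> Q" and dc: "(d, c) \<in> P"
  shows "(c, d) \<in> Q \<or> (c, d) = (y, x)"
proof -
  have xy: "(x, y) \<in> P" and un: "x \<noteq> y" "(x, y) \<notin> Q" "(y, x) \<notin> Q"
    and B1: "\<And>d. (x, d) \<in> Q \<Longrightarrow> (d, y) \<in> P \<Longrightarrow> (y, d) \<in> Q"
    and B2: "\<And>c. (c, y) \<in> Q \<Longrightarrow> (x, c) \<in> P \<Longrightarrow> (c, x) \<in> Q"
    using g by (auto simp: gp_def unranked_def)
  have Ptot: "\<And>a b. a \<noteq> b \<Longrightarrow> (a, b) \<in> P \<or> (b, a) \<in> P" using toP by (auto simp: total_on_def)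
  have Pas: "\<And>a b. (a, b) \<in> P \<Longrightarrow> (b, a) \<notin> P" using iP tP
    by (metis irreflD transD)
  have Ptr: "\<And>a b e. (a, b) \<in> P \<Longrightarrow> (b, e) \<in> P \<Longrightarrow> (a, e) \<in> P" using tP by (meson transD)
  have Qtr: "\<And>a b e. (a, b) \<in> Q \<Longrightarrow> (b, e) \<in> Q \<Longrightarrow> (a, e) \<in> Q" using tQ by (meson transD)
  show ?thesis
  proof (cases "c = y")
    case True
    show ?thesis
    proof (cases "d = x")
      case True then show ?thesis using \<open>c = y\<close> by simp
    next
      case False
      then show ?thesis using B1 d dc \<open>c = y\<close> by blast
    qed
  next
    case False
    then have cy: "(c, y) \<in> Q" using c by blast
    show ?thesis
    proof (cases "d = x")
      case True then show ?thesis using B2 cy dc by blast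
    next
      case False
      then have xd: "(x, d) \<in> Q" using d by blast
      have dy: "d \<noteq> y" using xd un by blast
      have cx: "c \<noteq> x" using cy un by blast
      show ?thesis
      proof (cases "(d, y) \<in> P \<or> (x, c) \<in> P")
        case True
        then show ?thesis using B1[OF xd] B2[OF cy] cy xd Qtr by blast
      next
        case False
        then have "(y, d) \<in> P" "(c, x) \<in> P" using Ptot dy cx by blast+
        then have "(y, x) \<in> P" using dc Ptr by blast
        then show ?thesis using xy Pas by blast
      qed
    qed
  qed
qed

lemma moveA:
  assumes iP: "irrefl P" and tP: "trans P" and toP: "total P"
    and I: "invr P W Q" and g: "gp P Q x y"
  shows "invr P W (trancl (Q \<union> {(x, y)}))"
proof -
  have iQ: "irrefl Q" and tQ: "trans Q" and ng: "nogap P Q" and cl: "clean P W Q"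
    using I by (auto simp: invr_def)
  have un: "x \<noteq> y" "(x, y) \<notin> Q" "(y, x) \<notin> Q" using g by (auto simp: gp_def unranked_def)
  let ?Q' = "trancl (Q \<union> {(x, y)})"
  have eq: "?Q' = Q \<union> {(c, d). (c = x \<or> (c, x) \<in> Q) \<and> (d = y \<or> (y, d) \<in> Q)}"
    by (rule trancl_ins[OF tQ])
  have Qtr: "\<And>a b e. (a, b) \<in> Q \<Longrightarrow> (b, e) \<in> Q \<Longrightarrow> (a, e) \<in> Q" using tQ by (meson transD)
  have sub: "Q \<subseteq> ?Q'" by auto
  have bk: "(a, b) \<in> Q" if "(a, b) \<in> ?Q'" "(b, a) \<in> P" for a b
  proof -
    have "(a, b) \<in> Q \<or> ((a = x \<or> (a, x) \<in> Q) \<and> (b = y \<or> (y, b) \<in> Q))" using that(1) eq by auto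
    then show ?thesis using safeA[OF iP tP toP tQ ng g _ _ that(2)] by blast
  qed
  have "irrefl ?Q'"
  proof -
    have "(a, a) \<notin> ?Q'" for a
    proof
      assume "(a, a) \<in> ?Q'"
      then have "(a, a) \<in> Q \<or> ((a = x \<or> (a, x) \<in> Q) \<and> (a = y \<or> (y, a) \<in> Q))" using eq by auto
      then show False using iQ un Qtr by (metis irreflD)
    qed
    then show ?thesis by (simp add: irrefl_def)
  qed
  moreover have "trans ?Q'" by simp
  moreover have "nogap P ?Q'"
    unfolding nogap_def
  proof (intro allI impI)
    fix u v m assume a: "(u, v) \<in> ?Q'" "(v, u) \<in> P" "(v, m) \<in> P" "(m, u) \<in> P"
    have "(u, v) \<in> Q" using bk a by blast
    then have "cmp Q m u \<or> cmp Q m v" using ng a unfolding nogap_def by blast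
    then show "cmp ?Q' m u \<or> cmp ?Q' m v" using sub unfolding cmp_def by blast
  qed
  moreover have "clean P W ?Q'"
    unfolding clean_def using bk cl unfolding clean_def by blast
  ultimately show ?thesis by (simp add: invr_def)
qed

lemma moveB:
  assumes iP: "irrefl P" and tP: "trans P" and toP: "total P"
    and I: "invr P W Q" and g: "gp P Q x y" and W: "(y, x) \<in> W"
  shows "invr P W (trancl (Q \<union> {(y, x)}))"
proof -
  have iQ: "irrefl Q" and tQ: "trans Q" and ng: "nogap P Q" and cl: "clean P W Q"
    using I by (auto simp: invr_def)
  have un: "x \<noteq> y" "(x, y) \<notin> Q" "(y, x) \<notin> Q" using g by (auto simp: gp_def unranked_def)
  have N: "\<And>m. (x, m) \<in> P \<Longrightarrow> (m, y) \<in> P \<Longrightarrow> cmp Q m x \<or> cmp Q m y"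
    using g by (auto simp: gp_def)
  let ?Q' = "trancl (Q \<union> {(y, x)})"
  have eq: "?Q' = Q \<union> {(c, d). (c = y \<or> (c, y) \<in> Q) \<and> (d = x \<or> (x, d) \<in> Q)}"
    by (rule trancl_ins[OF tQ])
  have Qtr: "\<And>a b e. (a, b) \<in> Q \<Longrightarrow> (b, e) \<in> Q \<Longrightarrow> (a, e) \<in> Q" using tQ by (meson transD)
  have sub: "Q \<subseteq> ?Q'" by auto
  have yx: "(y, x) \<in> ?Q'" by auto
  have bk: "(a, b) \<in> Q \<or> (a, b) = (y, x)" if "(a, b) \<in> ?Q'" "(b, a) \<in> P" for a b
  proof -
    have "(a, b) \<in> Q \<or> ((a = y \<or> (a, y) \<in> Q) \<and> (b = x \<or> (x, b) \<in> Q))" using that(1) eq by auto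
    then show ?thesis using safeB[OF iP tP toP tQ g _ _ that(2)] by blast
  qed
  have "irrefl ?Q'"
  proof -
    have "(a, a) \<notin> ?Q'" for a
    proof
      assume "(a, a) \<in> ?Q'"
      then have "(a, a) \<in> Q \<or> ((a = y \<or> (a, y) \<in> Q) \<and> (a = x \<or> (x, a) \<in> Q))" using eq by auto
      then show False using iQ un Qtr by (metis irreflD)
    qed
    then show ?thesis by (simp add: irrefl_def)
  qed
  moreover have "trans ?Q'" by simp
  moreover have "nogap P ?Q'"
    unfolding nogap_def
  proof (intro allI impI)
    fix u v m assume a: "(u, v) \<in> ?Q'" "(v, u) \<in> P" "(v, m) \<in> P" "(m, u) \<in> P"
    have "(u, v) \<in> Q \<or> (u, v) = (y, x)" using bk a by blast
    then show "cmp ?Q' m u \<or> cmp ?Q' m v"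
    proof
      assume "(u, v) \<in> Q"
      then have "cmp Q m u \<or> cmp Q m v" using ng a unfolding nogap_def by blast
      then show ?thesis using sub unfolding cmp_def by blast
    next
      assume "(u, v) = (y, x)"
      then have "cmp Q m x \<or> cmp Q m y" using N a by auto
      then show ?thesis using sub \<open>(u, v) = (y, x)\<close> unfolding cmp_def by blast
    qed
  qed
  moreover have "clean P W ?Q'"
    unfolding clean_def using bk cl W unfolding clean_def by blast
  ultimately show ?thesis by (simp add: invr_def)
qed

lemma exists_max:
  fixes r :: "('a::finite) rel"
  assumes "irrefl r" "trans r" "S \<noteq> {}"
  shows "\<exists>z\<in>S. \<forall>z'\<in>S. (z', z) \<notin> r"
proof -
  obtain s where "s \<in> S" using assms(3) by blast
  then obtain z where z: "z \<in> S" and zm: "\<forall>y. y \<in> S \<longrightarrow> card {w. (w, z) \<in> r} \<le> card {w. (w, y) \<in> r}"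
    using ex_has_least_nat[where P="\<lambda>y. y \<in> S" and m="\<lambda>y. card {w. (w, y) \<in> r}"] by blast
  have "(z', z) \<notin> r" if "z' \<in> S" for z'
  proof
    assume zz: "(z', z) \<in> r"
    have "{w. (w, z') \<in> r} \<subset> {w. (w, z) \<in> r}"
    proof
      show "{w. (w, z') \<in> r} \<subseteq> {w. (w, z) \<in> r}" using zz assms(2) by (auto dest: transD)
      show "{w. (w, z') \<in> r} \<noteq> {w. (w, z) \<in> r}" using zz assms(1) by (auto simp: irrefl_def)
    qed
    then have "card {w. (w, z') \<in> r} < card {w. (w, z) \<in> r}" by (simp add: psubset_card_mono)
    then show False using zm that by fastforce
  qed
  then show ?thesis using z by blast
qed

definition ladj :: "'a rel \<Rightarrow> 'a \<Rightarrow> 'a \<Rightarrow> bool" where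
  "ladj L u v \<longleftrightarrow> (u, v) \<in> L \<and> \<not> (\<exists>w. (u, w) \<in> L \<and> (w, v) \<in> L)"

lemma mil:
  fixes L :: "('a::finite) rel"
  assumes iL: "irrefl L" and tL: "trans L" and SL: "S \<subseteq> L" and ne: "S \<noteq> {}"
    and cl: "\<And>u w v. (u, w) \<in> L \<Longrightarrow> (w, v) \<in> L \<Longrightarrow> (u, v) \<in> S \<Longrightarrow> (u, w) \<in> S \<or> (w, v) \<in> S"
  shows "\<exists>u v. (u, v) \<in> S \<and> ladj L u v"
proof -
  define f where "f = (\<lambda>p. card {w. (fst p, w) \<in> L \<and> (w, snd p) \<in> L})"
  obtain p0 where "p0 \<in> S" using ne by blast
  then obtain p where p: "p \<in> S" and pm: "\<forall>q. q \<in> S \<longrightarrow> f p \<le> f q"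
    using ex_has_least_nat[where P="\<lambda>q. q \<in> S" and m=f] by blast
  obtain u v where uv: "p = (u, v)" by (cases p)
  have "\<not> (\<exists>w. (u, w) \<in> L \<and> (w, v) \<in> L)"
  proof
    assume "\<exists>w. (u, w) \<in> L \<and> (w, v) \<in> L"
    then obtain w where w: "(u, w) \<in> L" "(w, v) \<in> L" by blast
    have Ltr: "\<And>a b e. (a, b) \<in> L \<Longrightarrow> (b, e) \<in> L \<Longrightarrow> (a, e) \<in> L" using tL by (meson transD)
    have ww: "(w, w) \<notin> L" using iL by (simp add: irrefl_def)
    have "(u, w) \<in> S \<or> (w, v) \<in> S" using cl w p uv by blast
    then show False
    proof
      assume s: "(u, w) \<in> S"
      have "{z. (u, z) \<in> L \<and> (z, w) \<in> L} \<subset> {z. (u, z) \<in> L \<and> (z, v) \<in> L}"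
        using w ww Ltr by blast
      then have "f (u, w) < f (u, v)" unfolding f_def by (simp add: psubset_card_mono)
      then show False using pm s uv by fastforce
    next
      assume s: "(w, v) \<in> S"
      have "{z. (w, z) \<in> L \<and> (z, v) \<in> L} \<subset> {z. (u, z) \<in> L \<and> (z, v) \<in> L}"
        using w ww Ltr by blast
      then have "f (w, v) < f (u, v)" unfolding f_def by (simp add: psubset_card_mono)
      then show False using pm s uv by fastforce
    qed
  qed
  then show ?thesis using p uv SL unfolding ladj_def by blast
qed


lemma linext_set:
  fixes P Q :: "('a::finite) rel"
  assumes iP: "irrefl P" and tP: "trans P" and toP: "total P"
    and iQ: "irrefl Q" and tQ: "trans Q" and ng: "nogap P Q"
  shows "\<exists>L. L \<subseteq> T \<times> T \<and> irrefl L \<and> trans L \<and> (\<forall>a\<in>T. \<forall>b\<in>T. a \<noteq> b \<longrightarrow> (a, b) \<in> L \<or> (b, a) \<in> L)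
     \<and> (\<forall>a\<in>T. \<forall>b\<in>T. (a, b) \<in> Q \<longrightarrow> (a, b) \<in> L) \<and> (\<forall>v u. (v, u) \<in> L \<longrightarrow> (u, v) \<in> P \<longrightarrow> (v, u) \<in> Q)"
proof -
  have fin: "finite T" by simp
  show ?thesis using fin
  proof (induction T rule: finite_remove_induct)
    case empty
    show ?case by (rule exI[of _ "{}"]) (auto simp: irrefl_def trans_def)
  next
    case (remove T)
    have Ptot: "\<And>a b. a \<noteq> b \<Longrightarrow> (a, b) \<in> P \<or> (b, a) \<in> P" using toP by (auto simp: total_on_def)
    have Ptr: "\<And>a b e. (a, b) \<in> P \<Longrightarrow> (b, e) \<in> P \<Longrightarrow> (a, e) \<in> P" using tP by (meson transD)
    have Qtr: "\<And>a b e. (a, b) \<in> Q \<Longrightarrow> (b, e) \<in> Q \<Longrightarrow> (a, e) \<in> Q" using tQ by (meson transD)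
    define Mx where "Mx = {z \<in> T. \<forall>z'\<in>T. (z', z) \<notin> Q}"
    have "Mx \<noteq> {}" using exists_max[OF iQ tQ remove.hyps(2)] unfolding Mx_def by blast
    then obtain x where xM: "x \<in> Mx" and xb: "\<forall>z\<in>Mx. (z, x) \<notin> P"
      using exists_max[OF iP tP] by blast
    have xT: "x \<in> T" using xM Mx_def by blast
    obtain L' where L': "L' \<subseteq> (T - {x}) \<times> (T - {x})" "irrefl L'" "trans L'"
      "\<forall>a\<in>T - {x}. \<forall>b\<in>T - {x}. a \<noteq> b \<longrightarrow> (a, b) \<in> L' \<or> (b, a) \<in> L'"
      "\<forall>a\<in>T - {x}. \<forall>b\<in>T - {x}. (a, b) \<in> Q \<longrightarrow> (a, b) \<in> L'"
      "\<forall>v u. (v, u) \<in> L' \<longrightarrow> (u, v) \<in> P \<longrightarrow> (v, u) \<in> Q"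
      using remove.IH[OF xT] by blast
    define L where "L = L' \<union> {(x, u) | u. u \<in> T - {x}}"
    have key: "(x, u) \<in> Q" if u: "u \<in> T - {x}" "(u, x) \<in> P" for u
    proof -
      have "u \<notin> Mx" using xb u by blast
      then have "{w \<in> T. (w, u) \<in> Q} \<noteq> {}" using u unfolding Mx_def by blast
      then obtain w where w0: "w \<in> {w \<in> T. (w, u) \<in> Q}" and wm: "\<forall>z'\<in>{w \<in> T. (w, u) \<in> Q}. (z', w) \<notin> Q"
        using exists_max[OF iQ tQ] by meson
      have w: "w \<in> T" "(w, u) \<in> Q" using w0 by auto
      have "(z', w) \<notin> Q" if "z' \<in> T" for z'
      proof
        assume "(z', w) \<in> Q"
        then have "(z', u) \<in> Q" using Qtr w(2) by blast
        then show False using wm that \<open>(z', w) \<in> Q\<close> by blast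
      qed
      then have wM: "w \<in> Mx" unfolding Mx_def using w(1) by blast
      show ?thesis
      proof (cases "w = x")
        case True then show ?thesis using w by simp
      next
        case False
        then have xw: "(x, w) \<in> P" using xb wM Ptot by blast
        have uw: "(u, w) \<in> P" using Ptr u(2) xw by blast
        have c2: "cmp Q x w \<or> cmp Q x u" using ng w(2) uw u(2) xw unfolding nogap_def by blast
        have xmax: "\<forall>z'\<in>T. (z', x) \<notin> Q" using xM unfolding Mx_def by blast
        have wmax: "\<forall>z'\<in>T. (z', w) \<notin> Q" using wM unfolding Mx_def by blast
        have n1: "(x, w) \<notin> Q" using wmax xT by blast
        have n2: "(w, x) \<notin> Q" using xmax w(1) by blast
        have n3: "(u, x) \<notin> Q" using xmax u(1) by blast
        show ?thesis using c2 n1 n2 n3 unfolding cmp_def by blast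
      qed
    qed
    show ?case
    proof (rule exI[of _ L], intro conjI)
      show "L \<subseteq> T \<times> T" using L'(1) xT unfolding L_def by blast
      show "irrefl L" using L'(1,2) unfolding L_def irrefl_def by blast
      show "trans L"
      proof (rule transI)
        fix a b c assume ab: "(a, b) \<in> L" and bc: "(b, c) \<in> L"
        show "(a, c) \<in> L"
        proof (cases "(a, b) \<in> L'")
          case True
          then have "b \<noteq> x" using L'(1) by blast
          then have "(b, c) \<in> L'" using bc unfolding L_def by blast
          then show ?thesis using True L'(3) unfolding L_def by (meson UnI1 transD)
        next
          case False
          then have "a = x" using ab unfolding L_def by blast
          have "c \<in> T - {x}" using bc L'(1) unfolding L_def by blast
          then show ?thesis using \<open>a = x\<close> unfolding L_def by blast
        qed
      qed
      show "\<forall>a\<in>T. \<forall>b\<in>T. a \<noteq> b \<longrightarrow> (a, b) \<in> L \<or> (b, a) \<in> L"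
        using L'(4) unfolding L_def by blast
      show "\<forall>a\<in>T. \<forall>b\<in>T. (a, b) \<in> Q \<longrightarrow> (a, b) \<in> L"
      proof (intro ballI impI)
        fix a b assume ab: "a \<in> T" "b \<in> T" "(a, b) \<in> Q"
        have "b \<noteq> x" using ab xM unfolding Mx_def by blast
        show "(a, b) \<in> L"
        proof (cases "a = x")
          case True then show ?thesis using ab \<open>b \<noteq> x\<close> unfolding L_def by blast
        next
          case False then show ?thesis using ab \<open>b \<noteq> x\<close> L'(5) unfolding L_def by blast
        qed
      qed
      show "\<forall>v u. (v, u) \<in> L \<longrightarrow> (u, v) \<in> P \<longrightarrow> (v, u) \<in> Q"
        using L'(6) key unfolding L_def by blast
    qed
  qed
qed

lemma linext:
  fixes P Q :: "('a::finite) rel"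
  assumes "irrefl P" "trans P" "total P" "irrefl Q" "trans Q" "nogap P Q"
  shows "\<exists>L. irrefl L \<and> trans L \<and> total L \<and> Q \<subseteq> L \<and> (\<forall>v u. (v, u) \<in> L \<longrightarrow> (u, v) \<in> P \<longrightarrow> (v, u) \<in> Q)"
proof -
  obtain L where L: "irrefl L" "trans L" "\<forall>a\<in>UNIV. \<forall>b\<in>UNIV. a \<noteq> b \<longrightarrow> (a, b) \<in> L \<or> (b, a) \<in> L"
     "\<forall>a\<in>UNIV. \<forall>b\<in>UNIV. (a, b) \<in> Q \<longrightarrow> (a, b) \<in> L" "\<forall>v u. (v, u) \<in> L \<longrightarrow> (u, v) \<in> P \<longrightarrow> (v, u) \<in> Q"
    using linext_set[OF assms, of UNIV] by blast
  have "total L" using L(3) unfolding total_on_def by blast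
  moreover have "Q \<subseteq> L" using L(4) by auto
  ultimately show ?thesis using L by blast
qed


lemma asymI_it: "irrefl L \<Longrightarrow> trans L \<Longrightarrow> (a, b) \<in> L \<Longrightarrow> (b, a) \<notin> L"
  by (metis irreflD transD)

lemma gp_of_L:
  assumes iP: "irrefl P" and toP: "total P"
    and iL: "irrefl L" and tL: "trans L" and toL: "total L"
    and QL: "Q \<subseteq> L" and key: "\<forall>v u. (v, u) \<in> L \<longrightarrow> (u, v) \<in> P \<longrightarrow> (v, u) \<in> Q"
    and adj: "ladj L x y" and un: "unranked Q x y" and iQ: "irrefl Q"
  shows "gp P Q x y"
proof -
  have xy: "(x, y) \<in> L" and na: "\<And>w. (x, w) \<in> L \<Longrightarrow> (w, y) \<notin> L" using adj unfolding ladj_def by blast+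
  have u: "x \<noteq> y" "(x, y) \<notin> Q" "(y, x) \<notin> Q" using un unfolding unranked_def by blast+
  have Ptot: "\<And>a b. a \<noteq> b \<Longrightarrow> (a, b) \<in> P \<or> (b, a) \<in> P" using toP by (auto simp: total_on_def)
  have Ltot: "\<And>a b. a \<noteq> b \<Longrightarrow> (a, b) \<in> L \<or> (b, a) \<in> L" using toL by (auto simp: total_on_def)
  have keyD: "\<And>v w. (v, w) \<in> L \<Longrightarrow> (w, v) \<in> P \<Longrightarrow> (v, w) \<in> Q" using key by blast
  have Pxy: "(x, y) \<in> P"
  proof (rule ccontr)
    assume "(x, y) \<notin> P"
    then have "(y, x) \<in> P" using Ptot u(1) by blast
    then show False using keyD[OF xy] u(2) by blast
  qed
  have B1: "(y, d) \<in> Q" if "(x, d) \<in> Q" "(d, y) \<in> P" for d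
  proof -
    have xd: "(x, d) \<in> L" using that QL by blast
    have "d \<noteq> y" using that u by blast
    then have "(y, d) \<in> L" using Ltot na[OF xd] by blast
    then show ?thesis using keyD that(2) by blast
  qed
  have B2: "(c, x) \<in> Q" if "(c, y) \<in> Q" "(x, c) \<in> P" for c
  proof -
    have cy: "(c, y) \<in> L" using that QL by blast
    have "c \<noteq> x" using that u by blast
    then have "(c, x) \<in> L" using Ltot na cy by blast
    then show ?thesis using keyD that(2) by blast
  qed
  have N: "cmp Q m x \<or> cmp Q m y" if "(x, m) \<in> P" "(m, y) \<in> P" for m
  proof -
    have "m \<noteq> x" "m \<noteq> y" using that iP by (auto simp: irrefl_def)
    then have "(x, m) \<in> L \<or> (m, x) \<in> L" using Ltot by blast
    then show ?thesis
    proof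
      assume "(m, x) \<in> L"
      then have "(m, x) \<in> Q" using keyD that(1) by blast
      then show ?thesis unfolding cmp_def by blast
    next
      assume "(x, m) \<in> L"
      then have "(y, m) \<in> L" using na Ltot \<open>m \<noteq> y\<close> by blast
      then have "(y, m) \<in> Q" using keyD that(2) by blast
      then show ?thesis unfolding cmp_def by blast
    qed
  qed
  show ?thesis unfolding gp_def using Pxy un B1 B2 N by blast
qed

lemma exists_ladj_unr:
  fixes L Q :: "('a::finite) rel"
  assumes iL: "irrefl L" and tL: "trans L" and toL: "total L" and QL: "Q \<subseteq> L"
    and tQ: "trans Q" and nt: "\<not> total Q"
  shows "\<exists>u v. ladj L u v \<and> unranked Q u v"
proof -
  define S where "S = {(u, v). (u, v) \<in> L \<and> unranked Q u v}"
  obtain a b where ab: "a \<noteq> b" "(a, b) \<notin> Q" "(b, a) \<notin> Q" using nt unfolding total_on_def by blast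
  have "(a, b) \<in> L \<or> (b, a) \<in> L" using toL ab(1) unfolding total_on_def by blast
  then have ne: "S \<noteq> {}" using ab unfolding S_def unranked_def by blast
  have SL: "S \<subseteq> L" unfolding S_def by blast
  have cl: "(u, w) \<in> S \<or> (w, v) \<in> S" if "(u, w) \<in> L" "(w, v) \<in> L" "(u, v) \<in> S" for u w v
  proof (rule ccontr)
    assume "\<not> ((u, w) \<in> S \<or> (w, v) \<in> S)"
    then have n1: "\<not> unranked Q u w" "\<not> unranked Q w v" using that unfolding S_def by auto
    have "u \<noteq> w" "w \<noteq> v" using that iL by (auto simp: irrefl_def)
    have "(w, u) \<notin> L" "(v, w) \<notin> L" using asymI_it[OF iL tL] that by blast+
    then have "(w, u) \<notin> Q" "(v, w) \<notin> Q" using QL by blast+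
    then have "(u, w) \<in> Q" "(w, v) \<in> Q" using n1 \<open>u \<noteq> w\<close> \<open>w \<noteq> v\<close> unfolding unranked_def by blast+
    then have "(u, v) \<in> Q" using tQ by (meson transD)
    then show False using that(3) unfolding S_def unranked_def by blast
  qed
  obtain u v where "(u, v) \<in> S" "ladj L u v" using mil[OF iL tL SL ne cl] by blast
  then show ?thesis unfolding S_def by blast
qed

lemma exists_gp:
  fixes P Q :: "('a::finite) rel"
  assumes iP: "irrefl P" and tP: "trans P" and toP: "total P"
    and iQ: "irrefl Q" and tQ: "trans Q" and ng: "nogap P Q" and nt: "\<not> total Q"
  shows "\<exists>x y. gp P Q x y"
proof -
  obtain L where L: "irrefl L" "trans L" "total L" "Q \<subseteq> L"
    "\<forall>v u. (v, u) \<in> L \<longrightarrow> (u, v) \<in> P \<longrightarrow> (v, u) \<in> Q"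
    using linext[OF iP tP toP iQ tQ ng] by blast
  obtain u v where "ladj L u v" "unranked Q u v" using exists_ladj_unr[OF L(1-4) tQ nt] by blast
  then show ?thesis using gp_of_L[OF iP toP L(1-5)] iQ by blast
qed

definition planok :: "'a rel \<Rightarrow> 'a rel \<Rightarrow> 'a rel \<Rightarrow> 'a rel \<Rightarrow> 'a \<Rightarrow> 'a \<Rightarrow> bool" where
  "planok P W R Q x y \<longleftrightarrow> gp P Q x y \<and> ((x, y) \<in> W \<longrightarrow> (x, y) \<in> R) \<and> ((y, x) \<in> W \<longrightarrow> (y, x) \<in> R)"

lemma exists_planok:
  fixes P Q R W :: "('a::finite) rel"
  assumes iP: "irrefl P" and tP: "trans P" and toP: "total P"
    and iQ: "irrefl Q" and tQ: "trans Q" and ng: "nogap P Q" and nt: "\<not> total Q"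
    and QR: "Q \<subseteq> R" and iR: "irrefl R" and tR: "trans R" and toR: "total R"
    and Radj: "\<And>u v. ladj R u v \<Longrightarrow> (u, v) \<in> W"
    and eff: "efficient P W R" and aW: "asym W"
  shows "\<exists>x y. planok P W R Q x y"
proof -
  obtain L where L: "irrefl L" "trans L" "total L" "Q \<subseteq> L"
    "\<forall>v u. (v, u) \<in> L \<longrightarrow> (u, v) \<in> P \<longrightarrow> (v, u) \<in> Q"
    using linext[OF iP tP toP iQ tQ ng] by blast
  have effD: "\<And>a b. (a, b) \<in> P \<Longrightarrow> (a, b) \<in> W \<Longrightarrow> (a, b) \<in> R" using eff unfolding efficient_def by blast
  have Rtot: "\<And>a b. a \<noteq> b \<Longrightarrow> (a, b) \<in> R \<or> (b, a) \<in> R" using toR by (auto simp: total_on_def)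
  have Ras: "\<And>a b. (a, b) \<in> R \<Longrightarrow> (b, a) \<notin> R" using asymI_it[OF iR tR] by blast
  have Las: "\<And>a b. (a, b) \<in> L \<Longrightarrow> (b, a) \<notin> L" using asymI_it[OF L(1,2)] by blast
  define S where "S = {(u, v). (u, v) \<in> L \<and> (v, u) \<in> R}"
  show ?thesis
  proof (cases "S = {}")
    case False
    have SL: "S \<subseteq> L" unfolding S_def by blast
    have cl: "(u, w) \<in> S \<or> (w, v) \<in> S" if "(u, w) \<in> L" "(w, v) \<in> L" "(u, v) \<in> S" for u w v
    proof (rule ccontr)
      assume "\<not> ((u, w) \<in> S \<or> (w, v) \<in> S)"
      then have n1: "(w, u) \<notin> R" "(v, w) \<notin> R" using that unfolding S_def by auto
      have "u \<noteq> w" "w \<noteq> v" using that L(1) by (auto simp: irrefl_def)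
      then have "(u, w) \<in> R" "(w, v) \<in> R" using n1 Rtot by blast+
      then have "(u, v) \<in> R" using tR by (meson transD)
      then show False using that(3) Ras unfolding S_def by blast
    qed
    obtain u v where uv: "(u, v) \<in> S" "ladj L u v" using mil[OF L(1,2) SL False cl] by blast
    have uvL: "(u, v) \<in> L" and vuR: "(v, u) \<in> R" using uv(1) unfolding S_def by blast+
    have "u \<noteq> v" using uvL L(1) by (auto simp: irrefl_def)
    moreover have "(u, v) \<notin> Q" using QR vuR Ras by blast
    moreover have "(v, u) \<notin> Q" using L(4) uvL Las by blast
    ultimately have un: "unranked Q u v" unfolding unranked_def by blast
    have g: "gp P Q u v" using gp_of_L[OF iP toP L(1-5) uv(2) un iQ] .
    then have "(u, v) \<in> P" unfolding gp_def by blast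
    then have "planok P W R Q u v" unfolding planok_def using g effD vuR by blast
    then show ?thesis by blast
  next
    case True
    have LR: "(a, b) \<in> R" if "(a, b) \<in> L" for a b
    proof -
      have "a \<noteq> b" using that L(1) by (auto simp: irrefl_def)
      then show ?thesis using Rtot True that unfolding S_def by blast
    qed
    obtain u v where uv: "ladj L u v" "unranked Q u v" using exists_ladj_unr[OF L(1-4) tQ nt] by blast
    have uvL: "(u, v) \<in> L" and na: "\<And>w. (u, w) \<in> L \<Longrightarrow> (w, v) \<notin> L" using uv(1) unfolding ladj_def by blast+
    have Ltot: "\<And>a b. a \<noteq> b \<Longrightarrow> (a, b) \<in> L \<or> (b, a) \<in> L" using L(3) by (auto simp: total_on_def)
    have "ladj R u v"
      unfolding ladj_def
    proof (intro conjI notI)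
      show "(u, v) \<in> R" using LR uvL .
      assume "\<exists>w. (u, w) \<in> R \<and> (w, v) \<in> R"
      then obtain w where w: "(u, w) \<in> R" "(w, v) \<in> R" by blast
      have "u \<noteq> w" "w \<noteq> v" using w iR by (auto simp: irrefl_def)
      have "(u, w) \<in> L" using Ltot[OF \<open>u \<noteq> w\<close>] LR Ras w(1) by blast
      moreover have "(w, v) \<in> L" using Ltot[OF \<open>w \<noteq> v\<close>] LR Ras w(2) by blast
      ultimately show False using na by blast
    qed
    then have W: "(u, v) \<in> W" using Radj by blast
    have g: "gp P Q u v" using gp_of_L[OF iP toP L(1-5) uv(1,2) iQ] .
    have "(v, u) \<notin> W" using aW W by (meson asymD)
    then have "planok P W R Q u v" unfolding planok_def using g LR uvL by blast
    then show ?thesis by blast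
  qed
qed


lemma rel_hist_snoc: "rel_hist (h @ [p]) = trancl (rel_hist h \<union> {p})"
  by (simp add: rel_hist_def)

lemma trancl_un_trancl: "trancl (trancl r \<union> s) = trancl (r \<union> s)"
  by (rule trancl_trancl_Un)

lemma rel_hist_set: "rel_hist h = trancl (set h)"
proof (induction h rule: rev_induct)
  case Nil then show ?case by (simp add: rel_hist_def)
next
  case (snoc p h)
  have "rel_hist (h @ [p]) = trancl (trancl (set h) \<union> {p})" by (simp add: rel_hist_snoc snoc.IH)
  also have "\<dots> = trancl (set h \<union> {p})" by (rule trancl_un_trancl)
  finally show ?case by simp
qed

lemma reaches_W: "reaches W \<sigma> h \<Longrightarrow> set h \<subseteq> W"
  by (induction rule: reaches.induct) auto

lemma feas_adj:
  assumes "feasible W R" "ladj R u v"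
  shows "(u, v) \<in> W"
proof -
  obtain \<sigma> h where h: "reaches W \<sigma> h" "R = rel_hist h"
    using assms(1) unfolding feasible_def is_outcome_def by blast
  have R: "R = trancl (set h)" using h(2) rel_hist_set by simp
  have uv: "(u, v) \<in> trancl (set h)" and na: "\<not> (\<exists>w. (u, w) \<in> R \<and> (w, v) \<in> R)"
    using assms(2) R unfolding ladj_def by blast+
  from uv show ?thesis
  proof (cases rule: tranclE)
    case base then show ?thesis using reaches_W[OF h(1)] by blast
  next
    case (step c)
    then show ?thesis using na R by blast
  qed
qed

lemma unimp:
  fixes P W R :: "('a::finite) rel"
  assumes toP: "total P" and iR: "irrefl R" and tR: "trans R" and toR: "total R"
    and eff: "efficient P W R"
  shows "unimprovable P W R"
proof -
  have Ras: "\<And>a b. (a, b) \<in> R \<Longrightarrow> (b, a) \<notin> R" using asymI_it[OF iR tR] by blast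
  have Rtot: "\<And>a b. a \<noteq> b \<Longrightarrow> (a, b) \<in> R \<or> (b, a) \<in> R" using toR by (auto simp: total_on_def)
  have Ptot: "\<And>a b. a \<noteq> b \<Longrightarrow> (a, b) \<in> P \<or> (b, a) \<in> P" using toP by (auto simp: total_on_def)
  have "\<not> (feasible W R' \<and> R' \<noteq> R \<and> more_aligned P R' R)" for R'
  proof
    assume a: "feasible W R' \<and> R' \<noteq> R \<and> more_aligned P R' R"
    have rk: "ranking R'" using a unfolding feasible_def by blast
    then have iR': "irrefl R'" and tR': "trans R'" and toR': "total R'"
      unfolding ranking_def proto_ranking_def by blast+
    have R'as: "\<And>a b. (a, b) \<in> R' \<Longrightarrow> (b, a) \<notin> R'" using asymI_it[OF iR' tR'] by blast
    have R'tot: "\<And>a b. a \<noteq> b \<Longrightarrow> (a, b) \<in> R' \<or> (b, a) \<in> R'" using toR' by (auto simp: total_on_def)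
    define S where "S = {(u, v). (u, v) \<in> R' \<and> (v, u) \<in> R}"
    have ne: "S \<noteq> {}"
    proof
      assume "S = {}"
      then have sub: "R' \<subseteq> R"
      proof (intro subrelI)
        fix u v assume "S = {}" "(u, v) \<in> R'"
        then have "u \<noteq> v" using iR' by (auto simp: irrefl_def)
        then show "(u, v) \<in> R" using Rtot \<open>S = {}\<close> \<open>(u, v) \<in> R'\<close> unfolding S_def by blast
      qed
      have "R \<subseteq> R'"
      proof (intro subrelI)
        fix u v assume uv: "(u, v) \<in> R"
        then have "u \<noteq> v" using iR by (auto simp: irrefl_def)
        then show "(u, v) \<in> R'" using R'tot sub Ras uv by blast
      qed
      then show False using sub a by blast
    qed
    have SL: "S \<subseteq> R'" unfolding S_def by blast
    have cl: "(u, w) \<in> S \<or> (w, v) \<in> S" if "(u, w) \<in> R'" "(w, v) \<in> R'" "(u, v) \<in> S" for u w v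
    proof (rule ccontr)
      assume "\<not> ((u, w) \<in> S \<or> (w, v) \<in> S)"
      then have n1: "(w, u) \<notin> R" "(v, w) \<notin> R" using that unfolding S_def by auto
      have "u \<noteq> w" "w \<noteq> v" using that iR' by (auto simp: irrefl_def)
      then have "(u, w) \<in> R" "(w, v) \<in> R" using n1 Rtot by blast+
      then have "(u, v) \<in> R" using tR by (meson transD)
      then show False using that(3) Ras unfolding S_def by blast
    qed
    obtain u v where uv: "(u, v) \<in> S" "ladj R' u v" using mil[OF iR' tR' SL ne cl] by blast
    have fR': "feasible W R'" using a by blast
    have W: "(u, v) \<in> W" by (rule feas_adj[OF fR' uv(2)])
    have uvR': "(u, v) \<in> R'" and vuR: "(v, u) \<in> R" using uv(1) unfolding S_def by blast+
    have "u \<noteq> v" using iR vuR by (auto simp: irrefl_def)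
    then have "(u, v) \<in> P \<or> (v, u) \<in> P" using Ptot by blast
    then show False
    proof
      assume "(u, v) \<in> P"
      then have "(u, v) \<in> R" using eff W unfolding efficient_def by blast
      then show False using Ras vuR by blast
    next
      assume "(v, u) \<in> P"
      then have "(v, u) \<in> R'" using a vuR unfolding more_aligned_def by blast
      then show False using R'as uvR' by blast
    qed
  qed
  moreover have "ranking R" unfolding ranking_def proto_ranking_def using iR tR toR by blast
  ultimately show ?thesis unfolding unimprovable_def by blast
qed


definition sig :: "'a rel \<Rightarrow> 'a rel \<Rightarrow> 'a rel \<Rightarrow> ('a \<times> 'a) list \<Rightarrow> 'a set" where
  "sig P W R h = (let Q = rel_hist h;
     p = (if (\<exists>p. planok P W R Q (fst p) (snd p)) then (SOME p. planok P W R Q (fst p) (snd p))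
          else if (\<exists>p. gp P Q (fst p) (snd p)) then (SOME p. gp P Q (fst p) (snd p))
          else (SOME p. unranked Q (fst p) (snd p)))
     in {fst p, snd p})"

lemma planok_gp: "planok P W R Q x y \<Longrightarrow> gp P Q x y"
  by (simp add: planok_def)

lemma gp_unr: "gp P Q x y \<Longrightarrow> unranked Q x y"
  by (simp add: gp_def)

lemma sig_cases:
  "\<exists>x y. sig P W R h = {x, y} \<and>
     ((\<exists>a b. planok P W R (rel_hist h) a b) \<longrightarrow> planok P W R (rel_hist h) x y) \<and>
     ((\<exists>a b. gp P (rel_hist h) a b) \<longrightarrow> gp P (rel_hist h) x y) \<and>
     ((\<exists>a b. unranked (rel_hist h) a b) \<longrightarrow> unranked (rel_hist h) x y)"
proof -
  define Q where "Q = rel_hist h"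
  define p where "p = (if (\<exists>p. planok P W R Q (fst p) (snd p)) then (SOME p. planok P W R Q (fst p) (snd p))
          else if (\<exists>p. gp P Q (fst p) (snd p)) then (SOME p. gp P Q (fst p) (snd p))
          else (SOME p. unranked Q (fst p) (snd p)))"
  have s: "sig P W R h = {fst p, snd p}" unfolding sig_def p_def Q_def Let_def by simp
  have c1: "planok P W R Q (fst p) (snd p)" if "\<exists>a b. planok P W R Q a b"
  proof -
    have e: "\<exists>p. planok P W R Q (fst p) (snd p)" using that by auto
    then show ?thesis unfolding p_def using someI_ex[OF e] by simp
  qed
  have c2: "gp P Q (fst p) (snd p)" if "\<exists>a b. gp P Q a b"
  proof (cases "\<exists>a b. planok P W R Q a b")
    case True show ?thesis by (rule planok_gp[OF c1[OF True]])
  next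
    case False
    have e: "\<exists>p. gp P Q (fst p) (snd p)" using that by auto
    have "\<not> (\<exists>p. planok P W R Q (fst p) (snd p))" using False by auto
    then show ?thesis unfolding p_def using someI_ex[OF e] e by simp
  qed
  have c3: "unranked Q (fst p) (snd p)" if "\<exists>a b. unranked Q a b"
  proof (cases "\<exists>a b. gp P Q a b")
    case True show ?thesis by (rule gp_unr[OF c2[OF True]])
  next
    case False
    then have n2: "\<not> (\<exists>p. gp P Q (fst p) (snd p))" by auto
    have n1: "\<not> (\<exists>p. planok P W R Q (fst p) (snd p))"
    proof
      assume "\<exists>p. planok P W R Q (fst p) (snd p)"
      then obtain q where "planok P W R Q (fst q) (snd q)" by blast
      then have "gp P Q (fst q) (snd q)" by (rule planok_gp)
      then show False using n2 by blast
    qed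
    have e: "\<exists>p. unranked Q (fst p) (snd p)" using that by auto
    show ?thesis unfolding p_def using someI_ex[OF e] n1 n2 by simp
  qed
  show ?thesis using s c1 c2 c3 unfolding Q_def by blast
qed

lemma invr_empty: "invr P W {}"
  by (simp add: invr_def nogap_def clean_def irrefl_def trans_def)

lemma invr_reach:
  fixes P W W' R :: "('a::finite) rel"
  assumes iP: "irrefl P" and tP: "trans P" and toP: "total P"
    and r: "reaches W' (sig P W R) h"
  shows "invr P W' (rel_hist h)"
  using r
proof (induction rule: reaches.induct)
  case Nil
  then show ?case by (simp add: rel_hist_def invr_empty)
next
  case (Step h x y)
  let ?Q = "rel_hist h"
  have iQ: "irrefl ?Q" and tQ: "trans ?Q" and ng: "nogap P ?Q" using Step.IH by (auto simp: invr_def)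
  obtain a0 b0 where "gp P ?Q a0 b0" using exists_gp[OF iP tP toP iQ tQ ng Step.hyps(2)] by blast
  then obtain a b where ab: "sig P W R h = {a, b}" "gp P ?Q a b" using sig_cases[of P W R h] by blast
  have "{x, y} = {a, b}" using ab Step.hyps(3) by simp
  then have "(x = a \<and> y = b) \<or> (x = b \<and> y = a)" by (simp add: doubleton_eq_iff)
  then show ?case
  proof
    assume "x = a \<and> y = b"
    then show ?thesis using moveA[OF iP tP toP Step.IH ab(2)] by (simp add: rel_hist_snoc)
  next
    assume e: "x = b \<and> y = a"
    then have "(b, a) \<in> W'" using Step.hyps(5) by simp
    then show ?thesis using moveB[OF iP tP toP Step.IH ab(2)] e by (simp add: rel_hist_snoc)
  qed
qed


lemma plan_run:
  fixes P W R :: "('a::finite) rel"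
  assumes iP: "irrefl P" and tP: "trans P" and toP: "total P"
    and toW: "total W" and aW: "asym W"
    and iR: "irrefl R" and tR: "trans R" and toR: "total R"
    and Radj: "\<And>u v. ladj R u v \<Longrightarrow> (u, v) \<in> W" and eff: "efficient P W R"
  shows "reaches W (sig P W R) h \<Longrightarrow> rel_hist h \<subseteq> R \<Longrightarrow>
    \<exists>h'. reaches W (sig P W R) h' \<and> total (rel_hist h') \<and> rel_hist h' \<subseteq> R"
proof (induction "card (- rel_hist h)" arbitrary: h rule: less_induct)
  case less
  show ?case
  proof (cases "total (rel_hist h)")
    case True then show ?thesis using less.prems by blast
  next
    case False
    let ?Q = "rel_hist h"
    have I: "invr P W ?Q" by (rule invr_reach[OF iP tP toP less.prems(1)])
    have iQ: "irrefl ?Q" and tQ: "trans ?Q" and ng: "nogap P ?Q" using I by (auto simp: invr_def)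
    obtain a0 b0 where "planok P W R ?Q a0 b0"
      using exists_planok[OF iP tP toP iQ tQ ng False less.prems(2) iR tR toR Radj eff aW] by blast
    then obtain a b where ab: "sig P W R h = {a, b}" "planok P W R ?Q a b"
      using sig_cases[of P W R h] by blast
    have g: "gp P ?Q a b" using ab(2) by (rule planok_gp)
    have un: "a \<noteq> b" "(a, b) \<notin> ?Q" "(b, a) \<notin> ?Q" using gp_unr[OF g] unfolding unranked_def by blast+
    have "(a, b) \<in> W \<or> (b, a) \<in> W" using toW un(1) unfolding total_on_def by blast
    then obtain x y where xy: "{x, y} = {a, b}" "(x, y) \<in> W" "(x, y) \<in> R" "x \<noteq> y" "(x, y) \<notin> ?Q"
      using ab(2) un unfolding planok_def by blast
    have r': "reaches W (sig P W R) (h @ [(x, y)])"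
      by (rule reaches.Step[OF less.prems(1) False]) (use xy ab(1) in auto)
    have "trancl (?Q \<union> {(x, y)}) \<subseteq> trancl R"
      by (rule trancl_mono_subset) (use less.prems(2) xy(3) in blast)
    then have sub: "rel_hist (h @ [(x, y)]) \<subseteq> R" using tR by (simp add: rel_hist_snoc)
    have QQ: "?Q \<subseteq> rel_hist (h @ [(x, y)])" by (auto simp: rel_hist_snoc)
    have xyin: "(x, y) \<in> rel_hist (h @ [(x, y)])" by (auto simp: rel_hist_snoc)
    have "- rel_hist (h @ [(x, y)]) \<subset> - ?Q" using QQ xyin xy(5) by blast
    then have "card (- rel_hist (h @ [(x, y)])) < card (- ?Q)" by (simp add: psubset_card_mono)
    then show ?thesis using less.hyps r' sub by blast
  qed
qed


theorem proposition1:
  fixes P W R :: "('a::finite) rel"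
  assumes "ranking P"
    and "tournament W"
    and "ranking R"
    and "feasible W R"
    and "efficient P W R"
  shows "\<exists>\<sigma>. strategy \<sigma> \<and> regret_free P \<sigma> \<and> is_outcome W \<sigma> R"
proof -
  have iP: "irrefl P" and tP: "trans P" and toP: "total P"
    using assms(1) unfolding ranking_def proto_ranking_def by blast+
  have toW: "total W" and aW: "asym W" using assms(2) unfolding tournament_def by blast+
  have iR: "irrefl R" and tR: "trans R" and toR: "total R"
    using assms(3) unfolding ranking_def proto_ranking_def by blast+
  have Radj: "\<And>u v. ladj R u v \<Longrightarrow> (u, v) \<in> W" using feas_adj[OF assms(4)] by blast
  define \<sigma> where "\<sigma> = sig P W R"
  have st: "strategy \<sigma>"
    unfolding strategy_def
  proof (intro allI impI)
    fix h :: "('a \<times> 'a) list" assume "history h \<and> \<not> total (rel_hist h)"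
    then have "\<exists>a b. unranked (rel_hist h) a b" unfolding total_on_def unranked_def by blast
    then show "\<exists>x y. \<sigma> h = {x, y} \<and> unranked (rel_hist h) x y"
      using sig_cases[of P W R h] unfolding \<sigma>_def by blast
  qed
  have rf: "regret_free P \<sigma>"
    unfolding regret_free_def
  proof (intro allI impI)
    fix W' R' :: "'a rel" assume tW': "tournament W'" and oc: "is_outcome W' \<sigma> R'"
    have aW': "asym W'" using tW' unfolding tournament_def by blast
    obtain h where h: "reaches W' \<sigma> h" "total (rel_hist h)" "R' = rel_hist h"
      using oc unfolding is_outcome_def by blast
    have I: "invr P W' R'" using invr_reach[OF iP tP toP, of W' W R h] h unfolding \<sigma>_def by simp
    have iR': "irrefl R'" and tR': "trans R'" and cl: "clean P W' R'" using I by (auto simp: invr_def)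
    have toR': "total R'" using h by simp
    have "efficient P W' R'"
      unfolding efficient_def
    proof (intro allI impI)
      fix a b assume ab: "(a, b) \<in> P" "(a, b) \<in> W'"
      have "a \<noteq> b" using ab iP by (auto simp: irrefl_def)
      then have "(a, b) \<in> R' \<or> (b, a) \<in> R'" using toR' unfolding total_on_def by blast
      moreover have "(b, a) \<notin> R'"
      proof
        assume "(b, a) \<in> R'"
        then have "(b, a) \<in> W'" using cl ab(1) unfolding clean_def by blast
        then show False using aW' ab(2) by (meson asymD)
      qed
      ultimately show "(a, b) \<in> R'" by blast
    qed
    then show "unimprovable P W' R'" using unimp[OF toP iR' tR' toR'] by blast
  qed
  have "reaches W \<sigma> []" by (rule reaches.Nil)
  moreover have "rel_hist [] \<subseteq> R" by (simp add: rel_hist_def)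
  ultimately obtain h' where h': "reaches W \<sigma> h'" "total (rel_hist h')" "rel_hist h' \<subseteq> R"
    using plan_run[OF iP tP toP toW aW iR tR toR Radj assms(5)] unfolding \<sigma>_def by blast
  have "R \<subseteq> rel_hist h'"
  proof (intro subrelI)
    fix u v assume uv: "(u, v) \<in> R"
    then have "u \<noteq> v" using iR by (auto simp: irrefl_def)
    then have "(u, v) \<in> rel_hist h' \<or> (v, u) \<in> rel_hist h'" using h'(2) unfolding total_on_def by blast
    moreover have "(v, u) \<notin> R" using uv asymI_it[OF iR tR] by blast
    ultimately show "(u, v) \<in> rel_hist h'" using h'(3) by blast
  qed
  then have "R = rel_hist h'" using h'(3) by blast
  then have "is_outcome W \<sigma> R" unfolding is_outcome_def using h' by blast
  then show ?thesis using st rf by blast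
qed

end
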